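(* A set $U\subseteq\mathcal{B}$ is avoidable if and only if $U^{*}=\{s^{*}\mid s\in U\}$ is avoidable. Furthermore, $U$ is maximal avoidable if and only if $U^{*}$ is maximal avoidable.
   Context: The bicyclic inverse semigroup is $\mathcal{B}=\{(a,b)\in\mathbb{Z}\times\mathbb{Z}\mid a\ge 0,\ a+b\ge 0\}$ with multiplication $(a,b)(c,d)=(\max\{c+d,a\}-d,\ b+d)$ and inverse $(a,b)^{*}=(a+b,-b)$. A subset $U\subseteq\mathcal{B}$ is called avoidable if $\mathcal{B}$ can be partitioned into two subsets $A$ and $B$ such that no element of $U$ can be written as a product $xy$ of two distinct elements $x\neq y$ both in $A$, or both in $B$. A maximal avoidable set is an avoidable set not properly contained in any other avoidable subset of $\mathcal{B}$. *)

theory Defs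
  imports Main
begin

definition bicyclic :: "(int \<times> int) set" where
  "bicyclic = {(a, b). a \<ge> 0 \<and> a + b \<ge> 0}"

definition bmult :: "int \<times> int \<Rightarrow> int \<times> int \<Rightarrow> int \<times> int" where
  "bmult x y = (case x of (a, b) \<Rightarrow> case y of (c, d) \<Rightarrow> (max (c + d) a - d, b + d))"

definition binv :: "int \<times> int \<Rightarrow> int \<times> int" where
  "binv x = (case x of (a, b) \<Rightarrow> (a + b, - b))"

definition product_free_part :: "(int \<times> int) set \<Rightarrow> (int \<times> int) set \<Rightarrow> bool" where
  "product_free_part U P = (\<forall>x\<in>P. \<forall>y\<in>P. x \<noteq> y \<longrightarrow> bmult x y \<notin> U)"

definition avoidable :: "(int \<times> int) set \<Rightarrow> bool" where
  "avoidable U = (U \<subseteq> bicyclic \<and>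
     (\<exists>A B. A \<union> B = bicyclic \<and> A \<inter> B = {} \<and>
            product_free_part U A \<and> product_free_part U B))"

definition maximal_avoidable :: "(int \<times> int) set \<Rightarrow> bool" where
  "maximal_avoidable U = (avoidable U \<and> (\<forall>V. avoidable V \<and> U \<subseteq> V \<longrightarrow> V = U))"

end

theory Submission
  imports Defs
begin

lemma binv_binv[simp]: "binv (binv x) = x"
  by (cases x) (simp add: binv_def)

lemma binv_mult: "binv (bmult x y) = bmult (binv y) (binv x)"
  by (cases x; cases y) (simp add: binv_def bmult_def max.commute)

lemma binv_bic: "x \<in> bicyclic \<Longrightarrow> binv x \<in> bicyclic"
  by (cases x) (auto simp: binv_def bicyclic_def)

lemma binv_img_bic: "binv ` bicyclic = bicyclic"
proof
  show "binv ` bicyclic \<subseteq> bicyclic" using binv_bic by auto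
  show "bicyclic \<subseteq> binv ` bicyclic"
  proof
    fix x assume "x \<in> bicyclic"
    then have "binv (binv x) \<in> binv ` bicyclic" using binv_bic by blast
    then show "x \<in> binv ` bicyclic" by simp
  qed
qed

lemma inj_binv: "inj binv"
  by (metis binv_binv injI)

lemma binv_binv_img[simp]: "binv ` binv ` U = U"
  by (simp add: image_image)

lemma avoid_inv: "avoidable U \<Longrightarrow> avoidable (binv ` U)"
proof -
  assume "avoidable U"
  then obtain A B where U: "U \<subseteq> bicyclic" and AB: "A \<union> B = bicyclic" "A \<inter> B = {}"
    and pA: "product_free_part U A" and pB: "product_free_part U B"
    unfolding avoidable_def by blast
  have pf: "product_free_part (binv ` U) (binv ` P)" if "product_free_part U P" for P
    unfolding product_free_part_def
  proof (intro ballI impI)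
    fix x y assume "x \<in> binv ` P" "y \<in> binv ` P" "x \<noteq> y"
    then obtain x' y' where "x' \<in> P" "y' \<in> P" "x = binv x'" "y = binv y'" by auto
    moreover have "y' \<noteq> x'" using \<open>x \<noteq> y\<close> calculation by auto
    ultimately have "bmult y' x' \<notin> U" using that unfolding product_free_part_def by blast
    moreover have "bmult x y = binv (bmult y' x')" using \<open>x = binv x'\<close> \<open>y = binv y'\<close>
      by (simp add: binv_mult)
    ultimately show "bmult x y \<notin> binv ` U"
      using inj_binv by (simp add: inj_image_mem_iff)
  qed
  have "binv ` A \<union> binv ` B = bicyclic" using AB binv_img_bic by (simp add: image_Un[symmetric])
  moreover have "binv ` A \<inter> binv ` B = {}" using AB inj_binv
    by (simp add: image_Int[symmetric])
  moreover have "binv ` U \<subseteq> bicyclic" using U binv_bic by auto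
  moreover have "product_free_part (binv ` U) (binv ` A)" using pf pA .
  moreover have "product_free_part (binv ` U) (binv ` B)" using pf pB .
  ultimately show ?thesis unfolding avoidable_def by blast
qed

lemma avoid_iff: "avoidable U \<longleftrightarrow> avoidable (binv ` U)"
  using avoid_inv[of U] avoid_inv[of "binv ` U"] by auto

lemma max_inv: "maximal_avoidable U \<Longrightarrow> maximal_avoidable (binv ` U)"
proof -
  assume m: "maximal_avoidable U"
  show ?thesis unfolding maximal_avoidable_def
  proof (intro conjI allI impI)
    show "avoidable (binv ` U)" using m avoid_inv maximal_avoidable_def by blast
    fix V assume V: "avoidable V \<and> binv ` U \<subseteq> V"
    then have "avoidable (binv ` V)" using avoid_inv by blast
    moreover have "U \<subseteq> binv ` V"
    proof
      fix u assume "u \<in> U"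
      then have "binv u \<in> V" using V by blast
      then have "binv (binv u) \<in> binv ` V" by blast
      then show "u \<in> binv ` V" by simp
    qed
    ultimately have "binv ` V = U" using m unfolding maximal_avoidable_def by blast
    then have "binv ` binv ` V = binv ` U" by simp
    then show "V = binv ` U" by simp
  qed
qed

theorem proposition4p1:
  assumes "U \<subseteq> bicyclic"
  shows "(avoidable U \<longleftrightarrow> avoidable (binv ` U)) \<and>
         (maximal_avoidable U \<longleftrightarrow> maximal_avoidable (binv ` U))"
proof
  show "avoidable U \<longleftrightarrow> avoidable (binv ` U)" by (rule avoid_iff)
  have "maximal_avoidable (binv ` U) \<Longrightarrow> maximal_avoidable U"
    using max_inv[of "binv ` U"] by simp
  then show "maximal_avoidable U \<longleftrightarrow> maximal_avoidable (binv ` U)"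
    using max_inv[of U] by blast
qed

end
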